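(* Let $P$ be the group of order $32$ with GAP identifier ${\rm SmallGroup}(32,7)$ (of the form $(C_8\rtimes C_2)\rtimes C_2$), and let $M\le P$ be a maximal subgroup with $M\cong C_2\times D_8$. Then $\psi(P)=167$ and $\psi(M)=39$. Consequently, for every odd positive integer $m$, the group $G=P\times C_m$ and its maximal subgroup $H=M\times C_m$ satisfy $$\psi(G)=167\,\psi(C_m)\ >\ 156\,\psi(C_m)=\psi(H)\,|G:H|^2,$$ so the inequality $\psi(G)\le \psi(H)|G:H|^2$ fails for the subgroup $H\le G$.
   Context: All groups are finite. For a finite group $G$, $\psi(G)=\sum_{g\in G} o(g)$, where $o(g)$ is the order of $g$. $C_n$ denotes the cyclic group of order $n$ and $D_8$ the dihedral group of order $8$. ${\rm SmallGroup}(32,7)$ refers to the group numbered 7 among groups of order 32 in the GAP Small Groups Library; it has a maximal subgroup isomorphic to $C_2\times D_8$. *)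

theory Defs
  imports "HOL-Algebra.Algebra"
begin

definition psi :: "('a, 'b) monoid_scheme \<Rightarrow> nat" where
  "psi G = (\<Sum>g\<in>carrier G. group.ord G g)"

definition maximal_subgroup :: "'a set \<Rightarrow> ('a, 'b) monoid_scheme \<Rightarrow> bool" where
  "maximal_subgroup M G \<longleftrightarrow> subgroup M G \<and> M \<noteq> carrier G \<and>
     (\<forall>K. subgroup K G \<and> M \<subseteq> K \<longrightarrow> K = M \<or> K = carrier G)"

abbreviation cyclic_group :: "nat \<Rightarrow> int monoid" where
  "cyclic_group n \<equiv> integer_mod_group n"

text \<open>Dihedral group of order 8: pairs (r,s) standing for rho^r sigma^s,
  with sigma rho sigma = rho^-1.\<close>
definition D8 :: "(nat \<times> nat) monoid" where
  "D8 = \<lparr>carrier = {0..<4} \<times> {0..<2},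
         monoid.mult = (\<lambda>(r, s) (r', s'). ((r + (if s = 0 then r' else 4 - r')) mod 4, (s + s') mod 2)),
         one = (0, 0)\<rparr>"

text \<open>SmallGroup(32,7) = (C8 \<rtimes> C2) \<rtimes> C2, given by the presentation
  < x, y, z | x^8 = y^2 = z^2 = 1, y x y = x^5, z y z = y, z x z = x y >.
  The triple (i,j,k) with i < 8, j < 2, k < 2 stands for x^i y^j z^k.
  Conjugation by z maps x^i y^j to (x y)^i y^j = x^(i + 4 (i div 2)) y^(i + j).\<close>
definition SG32_7 :: "(nat \<times> nat \<times> nat) monoid" where
  "SG32_7 = \<lparr>carrier = {0..<8} \<times> {0..<2} \<times> {0..<2},
     monoid.mult = (\<lambda>(i, j, k) (i', j', k').
        let i'' = (if k = 0 then i' else (i' + 4 * (i' div 2)) mod 8);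
            j'' = (if k = 0 then j' else (i' + j') mod 2)
        in ((i + i'' + 4 * j * i'') mod 8, (j + j'') mod 2, (k + k') mod 2)),
     one = (0, 0, 0)\<rparr>"

end

theory Submission imports Defs begin

definition Zn :: "nat \<Rightarrow> nat monoid" where
  "Zn n = \<lparr>carrier = {0..<n}, monoid.mult = (\<lambda>a b. (a+b) mod n), one = 0\<rparr>"

lemma group_Zn: assumes "0 < n" shows "group (Zn n)"
proof (rule groupI)
  fix x assume x: "x \<in> carrier (Zn n)"
  show "\<exists>y\<in>carrier (Zn n). y \<otimes>\<^bsub>Zn n\<^esub> x = \<one>\<^bsub>Zn n\<^esub>"
  proof (intro bexI)
    show "(n - x) mod n \<otimes>\<^bsub>Zn n\<^esub> x = \<one>\<^bsub>Zn n\<^esub>" using x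
      by (simp add: Zn_def mod_add_left_eq)
    show "(n - x) mod n \<in> carrier (Zn n)" using assms by (simp add: Zn_def)
  qed
qed (use assms in \<open>auto simp: Zn_def mod_simps add.assoc\<close>)

definition sdp :: "('a, 'b) monoid_scheme \<Rightarrow> ('a \<Rightarrow> 'a) \<Rightarrow> ('a \<times> nat) monoid" where
  "sdp G s = \<lparr>carrier = carrier G \<times> {0..<2},
     monoid.mult = (\<lambda>(x,k) (y,k'). (x \<otimes>\<^bsub>G\<^esub> (if k = 0 then y else s y), (k + k') mod 2)),
     one = (\<one>\<^bsub>G\<^esub>, 0)\<rparr>"

lemma sdp_group:
  assumes G: "group G" and s: "s \<in> hom G G" and ss: "\<And>x. x \<in> carrier G \<Longrightarrow> s (s x) = x"
  shows "group (sdp G s)"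
proof -
  interpret G: group G by fact
  interpret h: group_hom G G s using s by (simp add: group_hom_def group_hom_axioms_def G.group_axioms)
  have sc: "x \<in> carrier G \<Longrightarrow> s x \<in> carrier G" for x using s by (auto simp: hom_def)
  have k2: "k < 2 \<Longrightarrow> k = 0 \<or> k = 1" for k :: nat by auto
  show ?thesis
  proof (rule groupI)
    fix x y assume "x \<in> carrier (sdp G s)" "y \<in> carrier (sdp G s)"
    then show "x \<otimes>\<^bsub>sdp G s\<^esub> y \<in> carrier (sdp G s)"
      by (auto simp: sdp_def sc)
  next
    show "\<one>\<^bsub>sdp G s\<^esub> \<in> carrier (sdp G s)" by (simp add: sdp_def)
  next
    fix x y z assume "x \<in> carrier (sdp G s)" "y \<in> carrier (sdp G s)" "z \<in> carrier (sdp G s)"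
    then obtain a k b l c m where xyz: "x = (a,k)" "y = (b,l)" "z = (c,m)"
      and abc: "a \<in> carrier G" "b \<in> carrier G" "c \<in> carrier G" and klm: "k < 2" "l < 2" "m < 2"
      by (auto simp: sdp_def)
    show "x \<otimes>\<^bsub>sdp G s\<^esub> y \<otimes>\<^bsub>sdp G s\<^esub> z = x \<otimes>\<^bsub>sdp G s\<^esub> (y \<otimes>\<^bsub>sdp G s\<^esub> z)"
      using k2[OF klm(1)] k2[OF klm(2)] k2[OF klm(3)] abc
      by (auto simp: xyz sdp_def sc G.m_assoc ss)
  next
    fix x assume "x \<in> carrier (sdp G s)"
    then show "\<one>\<^bsub>sdp G s\<^esub> \<otimes>\<^bsub>sdp G s\<^esub> x = x" by (auto simp: sdp_def)
  next
    fix x assume "x \<in> carrier (sdp G s)"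
    then obtain a k where x: "x = (a,k)" "a \<in> carrier G" "k < 2" by (auto simp: sdp_def)
    show "\<exists>y\<in>carrier (sdp G s). y \<otimes>\<^bsub>sdp G s\<^esub> x = \<one>\<^bsub>sdp G s\<^esub>"
    proof (cases "k = 0")
      case True
      then show ?thesis using x by (intro bexI[of _ "(inv\<^bsub>G\<^esub> a, 0)"]) (auto simp: sdp_def)
    next
      case False
      then have "k = 1" using x by auto
      then show ?thesis using x
        by (intro bexI[of _ "(s (inv\<^bsub>G\<^esub> a), 1)"])
          (auto simp: sdp_def sc h.hom_mult[symmetric] h.hom_one)
    qed
  qed
qed

lemma group_transfer:
  assumes H: "group H" and f: "bij_betw f (carrier G) (carrier H)"
    and cl: "\<And>x y. x \<in> carrier G \<Longrightarrow> y \<in> carrier G \<Longrightarrow> x \<otimes>\<^bsub>G\<^esub> y \<in> carrier G"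
    and hm: "\<And>x y. x \<in> carrier G \<Longrightarrow> y \<in> carrier G \<Longrightarrow> f (x \<otimes>\<^bsub>G\<^esub> y) = f x \<otimes>\<^bsub>H\<^esub> f y"
    and one: "\<one>\<^bsub>G\<^esub> \<in> carrier G" "f \<one>\<^bsub>G\<^esub> = \<one>\<^bsub>H\<^esub>"
  shows "group G"
proof -
  interpret H: group H by fact
  have inj: "inj_on f (carrier G)" and fc: "\<And>x. x \<in> carrier G \<Longrightarrow> f x \<in> carrier H"
    using f by (auto simp: bij_betw_def)
  show ?thesis
  proof (rule groupI)
    fix x y z assume xyz: "x \<in> carrier G" "y \<in> carrier G" "z \<in> carrier G"
    show "x \<otimes>\<^bsub>G\<^esub> y \<otimes>\<^bsub>G\<^esub> z = x \<otimes>\<^bsub>G\<^esub> (y \<otimes>\<^bsub>G\<^esub> z)"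
      by (rule inj_onD[OF inj]) (use xyz in \<open>simp_all add: cl hm fc H.m_assoc\<close>)
  next
    fix x assume x: "x \<in> carrier G"
    show "\<one>\<^bsub>G\<^esub> \<otimes>\<^bsub>G\<^esub> x = x"
      by (rule inj_onD[OF inj]) (use x one in \<open>simp_all add: cl hm fc\<close>)
  next
    fix x assume x: "x \<in> carrier G"
    have "inv\<^bsub>H\<^esub> (f x) \<in> f ` carrier G" using f fc[OF x] by (simp add: bij_betw_def)
    then obtain y where y: "y \<in> carrier G" "f y = inv\<^bsub>H\<^esub> (f x)" by auto
    have "y \<otimes>\<^bsub>G\<^esub> x = \<one>\<^bsub>G\<^esub>"
      by (rule inj_onD[OF inj]) (use x y one in \<open>simp_all add: cl hm fc\<close>)
    then show "\<exists>y\<in>carrier G. y \<otimes>\<^bsub>G\<^esub> x = \<one>\<^bsub>G\<^esub>" using y by blast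
  qed (use cl one in auto)
qed

definition s1 :: "nat \<Rightarrow> nat" where "s1 a = (5 * a) mod 8"
definition G2 :: "(nat \<times> nat) monoid" where "G2 = sdp (Zn 8) s1"
definition s2 :: "nat \<times> nat \<Rightarrow> nat \<times> nat" where
  "s2 = (\<lambda>(i,j). ((i + 4*(i div 2)) mod 8, (i + j) mod 2))"
definition G3 :: "((nat \<times> nat) \<times> nat) monoid" where "G3 = sdp G2 s2"

lemma A8: "{0..<8::nat} = {0,1,2,3,4,5,6,7}" by auto
lemma A4: "{0..<4::nat} = {0,1,2,3}" by auto
lemma A2: "{0..<2::nat} = {0,1}" by auto

lemma group_G2: "group G2"
  unfolding G2_def
proof (rule sdp_group)
  show "group (Zn 8)" by (rule group_Zn) simp
  show "s1 \<in> hom (Zn 8) (Zn 8)"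
    by (auto simp: hom_def Zn_def s1_def mod_simps algebra_simps)
  fix x assume "x \<in> carrier (Zn 8)"
  then show "s1 (s1 x) = x" by (auto simp: Zn_def s1_def A8)
qed

lemma group_G3: "group G3"
  unfolding G3_def
proof (rule sdp_group)
  show "group G2" by (rule group_G2)
  have c: "carrier G2 = {0,1,2,3,4,5,6,7} \<times> {0,1}" by (simp add: G2_def sdp_def Zn_def A8 A2)
  show "s2 \<in> hom G2 G2"
    unfolding hom_def c by (simp add: G2_def sdp_def Zn_def s1_def s2_def)
  fix x assume "x \<in> carrier G2"
  then show "s2 (s2 x) = x" unfolding c by (auto simp: s2_def)
qed


lemma mm1: "((a::nat) + k*(x mod n)) mod n = (a + k*x) mod n"
  by (metis mod_add_right_eq mod_mult_right_eq)
lemma mm2: "((a::nat) + (x mod n)*k) mod n = (a + x*k) mod n"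
  by (metis mod_add_right_eq mod_mult_left_eq)
lemma mm3: "(k*(x mod n) + (a::nat)) mod n = (k*x + a) mod n"
  by (metis mod_add_left_eq mod_mult_right_eq)
lemma mm4: "((x mod n)*k + (a::nat)) mod n = (x*k + a) mod n"
  by (metis mod_add_left_eq mod_mult_left_eq)
lemma mm5: "(k*(x mod n)) mod n = ((k::nat)*x) mod n"
  by (metis mod_mult_right_eq)
lemmas mms = mm1 mm2 mm3 mm4 mm5

lemma k2: "(k::nat) < 2 \<Longrightarrow> k = 0 \<or> k = 1" by auto

lemma SG_hom:
  assumes "x \<in> carrier SG32_7" "y \<in> carrier SG32_7"
  shows "(\<lambda>(i,j,k). ((i,j),k)) (x \<otimes>\<^bsub>SG32_7\<^esub> y) =
         (\<lambda>(i,j,k). ((i,j),k)) x \<otimes>\<^bsub>G3\<^esub> (\<lambda>(i,j,k). ((i,j),k)) y"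
proof -
  obtain i j k i' j' k' where xy: "x = (i,j,k)" "y = (i',j',k')" and b: "j < 2" "k < 2" "i' < 8"
    using assms by (cases x, cases y) (auto simp: SG32_7_def)
  show ?thesis
    using k2[OF b(1)] k2[OF b(2)] b(3)
    by (auto simp: xy SG32_7_def G3_def G2_def sdp_def Zn_def s1_def s2_def Let_def mms mod_simps algebra_simps)
qed


lemma group_SG: "group SG32_7"
proof (rule group_transfer[OF group_G3, where f="\<lambda>(i,j,k). ((i,j),k)"])
  show "bij_betw (\<lambda>(i, j, k). ((i, j), k)) (carrier SG32_7) (carrier G3)"
    by (rule bij_betwI[where g="\<lambda>((i,j),k). (i,j,k)"])
       (auto simp: SG32_7_def G3_def G2_def sdp_def Zn_def)
  show "x \<otimes>\<^bsub>SG32_7\<^esub> y \<in> carrier SG32_7" if "x \<in> carrier SG32_7" "y \<in> carrier SG32_7" for x y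
    using that by (auto simp: SG32_7_def Let_def)
  show "(\<lambda>(i,j,k). ((i,j),k)) (x \<otimes>\<^bsub>SG32_7\<^esub> y) =
         (\<lambda>(i,j,k). ((i,j),k)) x \<otimes>\<^bsub>G3\<^esub> (\<lambda>(i,j,k). ((i,j),k)) y"
    if "x \<in> carrier SG32_7" "y \<in> carrier SG32_7" for x y
    using SG_hom[OF that] .
qed (auto simp: SG32_7_def G3_def G2_def sdp_def Zn_def)

definition s4 :: "nat \<Rightarrow> nat" where "s4 r = (4 - r) mod 4"

lemma group_D8: "group D8"
proof (rule group_transfer[where f=id and H="sdp (Zn 4) s4"])
  show "group (sdp (Zn 4) s4)"
  proof (rule sdp_group)
    show "group (Zn 4)" by (rule group_Zn) simp
    show "s4 \<in> hom (Zn 4) (Zn 4)"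
      by (auto simp: hom_def Zn_def s4_def A4)
    fix x assume "x \<in> carrier (Zn 4)"
    then show "s4 (s4 x) = x" by (auto simp: Zn_def s4_def A4)
  qed
  show "bij_betw id (carrier D8) (carrier (sdp (Zn 4) s4))"
    by (simp add: D8_def sdp_def Zn_def)
  show "x \<otimes>\<^bsub>D8\<^esub> y \<in> carrier D8" if "x \<in> carrier D8" "y \<in> carrier D8" for x y
    using that by (auto simp: D8_def)
  show "id (x \<otimes>\<^bsub>D8\<^esub> y) = id x \<otimes>\<^bsub>sdp (Zn 4) s4\<^esub> id y" if "x \<in> carrier D8" "y \<in> carrier D8" for x y
    using that by (auto simp: D8_def sdp_def Zn_def s4_def mod_simps)
qed (auto simp: D8_def sdp_def Zn_def)


definition oc :: "('a, 'b) monoid_scheme \<Rightarrow> 'a \<Rightarrow> nat" where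
  "oc G x = (let x2 = x \<otimes>\<^bsub>G\<^esub> x; x4 = x2 \<otimes>\<^bsub>G\<^esub> x2 in
     if x = \<one>\<^bsub>G\<^esub> then 1 else if x2 = \<one>\<^bsub>G\<^esub> then 2 else if x4 = \<one>\<^bsub>G\<^esub> then 4 else 8)"

definition e8 :: "('a, 'b) monoid_scheme \<Rightarrow> 'a \<Rightarrow> bool" where
  "e8 G x = (let x2 = x \<otimes>\<^bsub>G\<^esub> x; x4 = x2 \<otimes>\<^bsub>G\<^esub> x2 in x4 \<otimes>\<^bsub>G\<^esub> x4 = \<one>\<^bsub>G\<^esub>)"

lemma div8: "(d::nat) dvd 8 \<Longrightarrow> d = 1 \<or> d = 2 \<or> d = 4 \<or> d = 8"
proof -
  assume d: "d dvd 8"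
  then have "d \<le> 8" "d > 0" by (auto intro: dvd_imp_le intro!: Nat.gr0I)
  then have "d \<in> {1,2,3,4,5,6,7,8}" by auto
  then show ?thesis using d by auto
qed

lemma ord_calc:
  fixes G (structure)
  assumes G: "group G" and x: "x \<in> carrier G" and e: "e8 G x"
  shows "group.ord G x = oc G x"
proof -
  interpret group G by fact
  have p2: "x [^] (2::nat) = x \<otimes> x" by (simp add: numeral_2_eq_2 x)
  have p4: "x [^] (4::nat) = x [^] (2::nat) \<otimes> x [^] (2::nat)"
    by (simp add: nat_pow_mult x)
  have p8: "x [^] (8::nat) = x [^] (4::nat) \<otimes> x [^] (4::nat)"
    by (simp add: nat_pow_mult x)
  have "x [^] (8::nat) = \<one>" using e by (simp add: e8_def Let_def p8 p4 p2)
  then have d8: "ord x dvd 8" using pow_eq_id x by blast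
  have i2: "x \<otimes> x = \<one> \<longleftrightarrow> ord x dvd 2" using pow_eq_id[OF x, of 2] p2 by simp
  have i4: "(x \<otimes> x) \<otimes> (x \<otimes> x) = \<one> \<longleftrightarrow> ord x dvd 4" using pow_eq_id[OF x, of 4] p2 p4 by simp
  have i1: "x = \<one> \<longleftrightarrow> ord x = 1" using ord_eq_1[OF x] by simp
  show ?thesis using div8[OF d8] i1 i2 i4 by (auto simp: oc_def Let_def)
qed

lemma psi_calc:
  assumes G: "group G" and L: "carrier G = set L" "distinct L" and e: "list_all (e8 G) L"
  shows "psi G = sum_list (map (oc G) L)"
proof -
  have "psi G = (\<Sum>g\<in>set L. oc G g)"
    unfolding psi_def L(1)[symmetric]
    by (rule sum.cong) (use ord_calc[OF G] e L(1) in \<open>auto simp: list_all_iff\<close>)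
  then show ?thesis using L(2) by (simp add: sum_list_distinct_conv_sum_set)
qed

definition L32 :: "(nat \<times> nat \<times> nat) list" where
  "L32 = List.product [0,1,2,3,4,5,6,7] (List.product [0,1] [0,1])"

lemma psi_SG: "psi SG32_7 = 167"
proof -
  have c: "carrier SG32_7 = set L32"
    by (simp add: SG32_7_def L32_def A8 A2)
  have "psi SG32_7 = sum_list (map (oc SG32_7) L32)"
    by (rule psi_calc[OF group_SG c]) (simp_all add: L32_def SG32_7_def e8_def)
  also have "\<dots> = 167" by (simp add: L32_def SG32_7_def oc_def)
  finally show ?thesis .
qed


lemma subgroup_fin:
  fixes G (structure)
  assumes G: "group G" and fin: "finite (carrier G)" and S: "S \<subseteq> carrier G" "\<one> \<in> S"
    and cl: "\<And>x y. x \<in> S \<Longrightarrow> y \<in> S \<Longrightarrow> x \<otimes> y \<in> S"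
  shows "subgroup S G"
proof -
  interpret group G by fact
  have pw: "a [^] (n::nat) \<in> S" if "a \<in> S" for a n
    by (induction n) (use that S cl in auto)
  have o: "0 < order G" using fin order_gt_0_iff_finite by blast
  show ?thesis
  proof (rule subgroupI)
    fix a assume a: "a \<in> S"
    then have ac: "a \<in> carrier G" using S by auto
    have "a [^] (order G - 1) \<otimes> a = a [^] (order G - 1 + 1)"
      using ac by (simp add: nat_pow_mult[symmetric])
    also have "\<dots> = \<one>" using o pow_order_eq_1[OF ac] by simp
    finally have "inv a = a [^] (order G - 1)"
      by (intro inv_equality) (use ac in auto)
    then show "inv a \<in> S" using pw[OF a] by simp
  qed (use S cl in auto)
qed

definition SS :: "(nat \<times> nat \<times> nat) set" where
  "SS = {(i,j,k). i < 8 \<and> even i \<and> j < 2 \<and> k < 2}"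

definition theta :: "nat \<times> nat \<times> nat \<Rightarrow> int \<times> nat \<times> nat" where
  "theta = (\<lambda>(i,j,k). (int j, i div 2, k))"

lemma even_mod8: "even ((x::nat) mod 8) \<longleftrightarrow> even x"
  by (simp add: dvd_mod_iff)

lemma Qlem: "even c \<Longrightarrow> ((2*u + c) mod 8) div 2 = ((u::nat) + (c div 2) mod 4) mod 4"
proof -
  assume "even c"
  then obtain d where c: "c = 2*d" by auto
  have "(2*u + c) mod 8 = 2 * ((u + d) mod 4)" unfolding c
    using mod_mult_mult1[of 2 "u+d" 4] by (simp add: algebra_simps)
  then show ?thesis by (simp add: c mod_simps)
qed

lemma Qlem2: "even c \<Longrightarrow> ((c + 2*u) mod 8) div 2 = ((u::nat) + (c div 2) mod 4) mod 4"
  using Qlem[of c u] by (simp add: add.commute)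

lemma Q3: "Suc (Suc (2 * u)) mod 8 div 2 = Suc u mod 4"
  using Qlem[of 2 u] by simp
lemma Q0: "2 * u mod 8 div 2 = (u::nat) mod 4"
  using Qlem[of 0 u] by simp

lemma u4: "(u::nat) < 4 \<Longrightarrow> u = 0 \<or> u = 1 \<or> u = 2 \<or> u = 3" by auto

lemma theta_aux: "u' < 4 \<Longrightarrow> j < 2 \<Longrightarrow> k < 2 \<Longrightarrow> j' < 2 \<Longrightarrow> k' < 2 \<Longrightarrow>
  theta ((2*u, j, k) \<otimes>\<^bsub>SG32_7\<^esub> (2*u',j',k')) = 
   theta (2*u, j, k) \<otimes>\<^bsub>cyclic_group 2 \<times>\<times> D8\<^esub> theta (2*u',j',k')"
  unfolding theta_def
  apply (elim u4[elim_format] k2[elim_format] disjE)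
  apply (simp_all add: SG32_7_def D8_def integer_mod_group_def Qlem Qlem2 Q3 Q0)
  done

lemma SS_aux: "u' < 4 \<Longrightarrow> j < 2 \<Longrightarrow> k < 2 \<Longrightarrow> j' < 2 \<Longrightarrow> k' < 2 \<Longrightarrow> u < 4 \<Longrightarrow>
  (2*u, j, k) \<otimes>\<^bsub>SG32_7\<^esub> (2*u',j',k') \<in> SS"
  unfolding SS_def
  apply (elim u4[elim_format] k2[elim_format] disjE)
  apply (simp_all add: SG32_7_def even_mod8)
  done

lemma SS_elem: "x \<in> SS \<Longrightarrow> \<exists>u j k. x = (2*u, j, k) \<and> u < 4 \<and> j < 2 \<and> k < 2"
  unfolding SS_def by (auto elim!: evenE)

lemma subgroup_SS: "subgroup SS SG32_7"
proof (rule subgroup_fin[OF group_SG])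
  show "finite (carrier SG32_7)" by (simp add: SG32_7_def)
  show "SS \<subseteq> carrier SG32_7" by (auto simp: SS_def SG32_7_def)
  show "\<one>\<^bsub>SG32_7\<^esub> \<in> SS" by (simp add: SS_def SG32_7_def)
  show "x \<otimes>\<^bsub>SG32_7\<^esub> y \<in> SS" if "x \<in> SS" "y \<in> SS" for x y
  proof -
    obtain u j k where x: "x = (2*u, j, k)" "u < 4" "j < 2" "k < 2" using SS_elem[OF \<open>x \<in> SS\<close>] by blast
    obtain u' j' k' where y: "y = (2*u', j', k')" "u' < 4" "j' < 2" "k' < 2" using SS_elem[OF \<open>y \<in> SS\<close>] by blast
    show ?thesis using SS_aux x y by simp
  qed
qed

lemma c2: "carrier (cyclic_group 2) = {0, 1}"
  by (auto simp: integer_mod_group_def)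

lemma theta_iso: "theta \<in> iso (SG32_7\<lparr>carrier := SS\<rparr>) (cyclic_group 2 \<times>\<times> D8)"
  unfolding iso_def
proof safe
  show "theta \<in> hom (SG32_7\<lparr>carrier := SS\<rparr>) (cyclic_group 2 \<times>\<times> D8)"
  proof (rule homI)
    fix x assume "x \<in> carrier (SG32_7\<lparr>carrier := SS\<rparr>)"
    then show "theta x \<in> carrier (cyclic_group 2 \<times>\<times> D8)"
      by (auto simp: SS_def theta_def c2 D8_def)
  next
    fix x y assume "x \<in> carrier (SG32_7\<lparr>carrier := SS\<rparr>)" "y \<in> carrier (SG32_7\<lparr>carrier := SS\<rparr>)"
    then have xy: "x \<in> SS" "y \<in> SS" by auto
    obtain u j k where x: "x = (2*u, j, k)" "u < 4" "j < 2" "k < 2" using SS_elem[OF xy(1)] by blast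
    obtain u' j' k' where y: "y = (2*u', j', k')" "u' < 4" "j' < 2" "k' < 2" using SS_elem[OF xy(2)] by blast
    show "theta (x \<otimes>\<^bsub>SG32_7\<lparr>carrier := SS\<rparr>\<^esub> y) = theta x \<otimes>\<^bsub>cyclic_group 2 \<times>\<times> D8\<^esub> theta y"
      using theta_aux x y by simp
  qed
  show "bij_betw theta (carrier (SG32_7\<lparr>carrier := SS\<rparr>)) (carrier (cyclic_group 2 \<times>\<times> D8))"
    by (rule bij_betwI[where g="\<lambda>(a,r,s). (2*r, nat a, s)"])
       (auto simp: c2 SS_def theta_def D8_def)
qed


lemma psi_iso:
  assumes A: "group A" and B: "group B" and h: "h \<in> iso A B"
  shows "psi A = psi B"
proof -
  interpret A: group A by fact
  interpret B: group B by fact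
  have hom: "h \<in> hom A B" and bij: "bij_betw h (carrier A) (carrier B)" using h by (auto simp: iso_def)
  interpret gh: group_hom A B h using hom by (simp add: group_hom_def group_hom_axioms_def A.group_axioms B.group_axioms)
  have inj: "inj_on h (carrier A)" using bij by (simp add: bij_betw_def)
  have o: "A.ord a = B.ord (h a)" if a: "a \<in> carrier A" for a
  proof -
    have "B.ord (h a) = A.ord a \<longleftrightarrow> (\<forall>n. h a [^]\<^bsub>B\<^esub> n = \<one>\<^bsub>B\<^esub> \<longleftrightarrow> A.ord a dvd n)"
      by (rule B.ord_unique) (use a in simp)
    moreover have "h a [^]\<^bsub>B\<^esub> n = \<one>\<^bsub>B\<^esub> \<longleftrightarrow> A.ord a dvd n" for n
    proof -
      have "h a [^]\<^bsub>B\<^esub> n = h (a [^]\<^bsub>A\<^esub> n)" using a by (simp add: gh.hom_nat_pow)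
      also have "\<dots> = \<one>\<^bsub>B\<^esub> \<longleftrightarrow> a [^]\<^bsub>A\<^esub> n = \<one>\<^bsub>A\<^esub>"
        using inj_onD[OF inj, of "a [^]\<^bsub>A\<^esub> n" "\<one>\<^bsub>A\<^esub>"] a by auto
      finally show ?thesis using A.pow_eq_id[OF a] by simp
    qed
    ultimately show ?thesis by simp
  qed
  have "psi A = (\<Sum>a\<in>carrier A. B.ord (h a))" unfolding psi_def by (rule sum.cong) (simp_all add: o)
  also have "\<dots> = psi B" unfolding psi_def by (rule sum.reindex_bij_betw[OF bij])
  finally show ?thesis .
qed

lemma max2:
  fixes G (structure)
  assumes G: "group G" and fin: "finite (carrier G)" and H: "subgroup H G" and o: "order G = 2 * card H"
  shows "maximal_subgroup H G"
proof -
  interpret group G by fact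
  have Hc: "H \<subseteq> carrier G" using H subgroup.subset by blast
  have fH: "finite H" using fin Hc finite_subset by blast
  have cH: "card H > 0" using fH H subgroup.one_closed by (metis card_gt_0_iff empty_iff)
  have ne: "H \<noteq> carrier G" using o cH unfolding order_def by auto
  show ?thesis unfolding maximal_subgroup_def
  proof (intro conjI H ne allI impI)
    fix K assume K: "subgroup K G \<and> H \<subseteq> K"
    have Kc: "K \<subseteq> carrier G" using K subgroup.subset by blast
    have fK: "finite K" using fin Kc finite_subset by blast
    have le: "card H \<le> card K" using K fK card_mono by blast
    have le2: "card K \<le> order G" using Kc fin card_mono unfolding order_def by blast
    have l: "card (rcosets K) * card K = order G" using lagrange K by blast
    define r where "r = card (rcosets K)"
    have rr: "r * card K = 2 * card H" using l o r_def by simp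
    have "r = 1 \<or> r = 2"
    proof -
      have "r \<noteq> 0"
      proof
        assume "r = 0" then show False using rr cH by simp
      qed
      moreover have "r < 3"
      proof (rule ccontr)
        assume "\<not> r < 3"
        then have "3 * card K \<le> r * card K" by simp
        then show False using rr le cH by linarith
      qed
      ultimately show ?thesis by auto
    qed
    then show "K = H \<or> K = carrier G"
    proof
      assume "r = 1"
      then have "card K = card (carrier G)" using rr o unfolding order_def by simp
      then have "K = carrier G" using card_subset_eq[OF fin Kc] by simp
      then show ?thesis by simp
    next
      assume "r = 2"
      then have "card H = card K" using rr by simp
      then have "H = K" using card_subset_eq[OF fK] K by simp
      then show ?thesis by simp
    qed
  qed
qed

lemma DirProd_pow:
  "(a, b) [^]\<^bsub>A \<times>\<times> B\<^esub> (n::nat) = (a [^]\<^bsub>A\<^esub> n, b [^]\<^bsub>B\<^esub> n)"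
  by (induction n) auto

lemma psi_DirProd:
  assumes A: "group A" and B: "group B" and fA: "finite (carrier A)" and fB: "finite (carrier B)"
    and cop: "coprime (order A) (order B)"
  shows "psi (A \<times>\<times> B) = psi A * psi B"
proof -
  interpret A: group A by fact
  interpret B: group B by fact
  interpret AB: group "A \<times>\<times> B" by (rule DirProd_group[OF A B])
  have o: "AB.ord (a, b) = A.ord a * B.ord b" if a: "a \<in> carrier A" and b: "b \<in> carrier B" for a b
  proof -
    have cp: "coprime (A.ord a) (B.ord b)"
      by (rule coprime_divisors[OF A.ord_dvd_group_order[OF a] B.ord_dvd_group_order[OF b] cop])
    have "(a, b) [^]\<^bsub>A \<times>\<times> B\<^esub> n = \<one>\<^bsub>A \<times>\<times> B\<^esub> \<longleftrightarrow> A.ord a * B.ord b dvd n" for n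
    proof -
      have "(a, b) [^]\<^bsub>A \<times>\<times> B\<^esub> n = \<one>\<^bsub>A \<times>\<times> B\<^esub> \<longleftrightarrow> A.ord a dvd n \<and> B.ord b dvd n"
        using A.pow_eq_id[OF a] B.pow_eq_id[OF b] by (simp add: DirProd_pow)
      also have "\<dots> \<longleftrightarrow> A.ord a * B.ord b dvd n"
        using divides_mult[OF _ _ cp] dvd_mult_left dvd_mult_right by metis
      finally show ?thesis .
    qed
    then show ?thesis using AB.ord_unique[of "(a,b)"] a b by simp
  qed
  have "psi (A \<times>\<times> B) = (\<Sum>(a,b)\<in>carrier A \<times> carrier B. A.ord a * B.ord b)"
    unfolding psi_def by (rule sum.cong) (auto simp: o)
  also have "\<dots> = psi A * psi B"
    unfolding psi_def by (simp add: sum_product sum.cartesian_product)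
  finally show ?thesis .
qed

lemma psi_pos:
  fixes G (structure)
  assumes G: "group G" and fin: "finite (carrier G)"
  shows "0 < psi G"
proof -
  interpret group G by fact
  have "ord \<one> \<le> psi G" unfolding psi_def by (rule member_le_sum) (simp_all add: fin)
  then show ?thesis by simp
qed

definition LD :: "(int \<times> nat \<times> nat) list" where
  "LD = List.product [0,1] (List.product [0,1,2,3] [0,1])"

lemma psi_C2D8: "psi (cyclic_group 2 \<times>\<times> D8) = 39"
proof -
  have g: "group (cyclic_group 2 \<times>\<times> D8)" by (rule DirProd_group[OF group_integer_mod_group group_D8])
  have c: "carrier (cyclic_group 2 \<times>\<times> D8) = set LD"
    by (simp add: c2 D8_def LD_def A4 A2)
  have "psi (cyclic_group 2 \<times>\<times> D8) = sum_list (map (oc (cyclic_group 2 \<times>\<times> D8)) LD)"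
    by (rule psi_calc[OF g c]) (simp_all add: LD_def D8_def integer_mod_group_def e8_def)
  also have "\<dots> = 39" by (simp add: LD_def D8_def integer_mod_group_def oc_def)
  finally show ?thesis .
qed

lemma u8: "(u::nat) < 8 \<Longrightarrow> u = 0 \<or> u = 1 \<or> u = 2 \<or> u = 3 \<or> u = 4 \<or> u = 5 \<or> u = 6 \<or> u = 7" by auto

lemma card_SS: "card SS = 16"
proof -
  have ev: "(i::nat) < 8 \<and> even i \<longleftrightarrow> i \<in> {0,2,4,6}" for i
  proof
    assume "i < 8 \<and> even i"
    then have "i < 8" "even i" by auto
    then show "i \<in> {0,2,4,6}" using u8[OF \<open>i < 8\<close>] by auto
  qed auto
  have e1: "SS = {i. i < 8 \<and> even i} \<times> {j::nat. j < 2} \<times> {k::nat. k < 2}" by (auto simp: SS_def)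
  have e2: "{i::nat. i < 8 \<and> even i} = {0,2,4,6}" using ev by blast
  have e3: "{j::nat. j < 2} = {0,1}" by auto
  have "SS = {0,2,4,6} \<times> {0,1} \<times> {0,1}" unfolding e1 e2 e3 ..
  moreover have "card ({0,2,4,6::nat} \<times> {0,1::nat} \<times> {0,1::nat}) = 16"
    by (simp only: card_cartesian_product) simp
  ultimately show ?thesis by (simp only:)
qed

lemma order_SG: "order SG32_7 = 32"
  by (simp add: order_def SG32_7_def card_cartesian_product)

lemma cm_facts:
  assumes "odd m"
  shows "group (cyclic_group m)" "finite (carrier (cyclic_group m))" "order (cyclic_group m) = m"
    "coprime 32 m" "coprime 16 m"
proof -
  have m: "m \<noteq> 0" using assms by (auto simp: odd_pos)
  show "group (cyclic_group m)" by simp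
  show "finite (carrier (cyclic_group m))" using m by (simp add: carrier_integer_mod_group)
  show "order (cyclic_group m) = m" using m by (simp add: order_def carrier_integer_mod_group)
  have c2': "coprime (2::nat) m" using assms by simp
  have "coprime ((2::nat)^5) m" using c2' coprime_power_left_iff by blast
  then show "coprime 32 m" by simp
  have "coprime ((2::nat)^4) m" using c2' coprime_power_left_iff by blast
  then show "coprime 16 m" by simp
qed

theorem mainTheorem6:
  shows "group SG32_7 \<and> psi SG32_7 = 167 \<and>
    (\<exists>M. maximal_subgroup M SG32_7 \<and> SG32_7\<lparr>carrier := M\<rparr> \<cong> cyclic_group 2 \<times>\<times> D8) \<and>
    (\<forall>M. maximal_subgroup M SG32_7 \<and> SG32_7\<lparr>carrier := M\<rparr> \<cong> cyclic_group 2 \<times>\<times> D8 \<longrightarrow>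
       psi (SG32_7\<lparr>carrier := M\<rparr>) = 39 \<and>
       (\<forall>m::nat. odd m \<longrightarrow>
          (let G = SG32_7 \<times>\<times> cyclic_group m;
               H = M \<times> carrier (cyclic_group m)
           in maximal_subgroup H G \<and>
              psi G = 167 * psi (cyclic_group m) \<and>
              psi (G\<lparr>carrier := H\<rparr>) * (card (rcosets\<^bsub>G\<^esub> H))^2 = 156 * psi (cyclic_group m) \<and>
              psi G > psi (G\<lparr>carrier := H\<rparr>) * (card (rcosets\<^bsub>G\<^esub> H))^2)))"
proof (intro conjI allI impI)
  show gS: "group SG32_7" by (rule group_SG)
  show "psi SG32_7 = 167" by (rule psi_SG)
  have finS: "finite (carrier SG32_7)" by (simp add: SG32_7_def)
  have gD: "group (cyclic_group 2 \<times>\<times> D8)" by (rule DirProd_group[OF group_integer_mod_group group_D8])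
  show "\<exists>M. maximal_subgroup M SG32_7 \<and> SG32_7\<lparr>carrier := M\<rparr> \<cong> cyclic_group 2 \<times>\<times> D8"
  proof (intro exI conjI)
    show "maximal_subgroup SS SG32_7"
      by (rule max2[OF gS finS subgroup_SS]) (simp add: order_SG card_SS)
    show "SG32_7\<lparr>carrier := SS\<rparr> \<cong> cyclic_group 2 \<times>\<times> D8"
      using theta_iso unfolding is_iso_def by blast
  qed
  fix M assume MM: "maximal_subgroup M SG32_7 \<and> SG32_7\<lparr>carrier := M\<rparr> \<cong> cyclic_group 2 \<times>\<times> D8"
  have sM: "subgroup M SG32_7" using MM by (simp add: maximal_subgroup_def)
  have gM: "group (SG32_7\<lparr>carrier := M\<rparr>)" by (rule subgroup.subgroup_is_group[OF sM gS])
  obtain h where h: "h \<in> iso (SG32_7\<lparr>carrier := M\<rparr>) (cyclic_group 2 \<times>\<times> D8)"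
    using MM unfolding is_iso_def by blast
  show psiM: "psi (SG32_7\<lparr>carrier := M\<rparr>) = 39"
    using psi_iso[OF gM gD h] psi_C2D8 by simp
  have cardM: "card M = 16"
  proof -
    have "card (carrier (SG32_7\<lparr>carrier := M\<rparr>)) = card (carrier (cyclic_group 2 \<times>\<times> D8))"
      using MM iso_same_card by blast
    also have "\<dots> = 16" by (simp add: c2 D8_def card_cartesian_product)
    finally show ?thesis by simp
  qed
  have finM: "finite M" using cardM card.infinite by fastforce
  fix m :: nat assume m: "odd m"
  note cm = cm_facts[OF m]
  define G where "G = SG32_7 \<times>\<times> cyclic_group m"
  define H where "H = M \<times> carrier (cyclic_group m)"
  have gG: "group G" unfolding G_def by (rule DirProd_group[OF gS cm(1)])
  have finG: "finite (carrier G)" using finS cm(2) by (simp add: G_def)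
  have sH: "subgroup H G" unfolding H_def G_def
    by (rule DirProd_subgroups[OF gS sM cm(1) group.subgroup_self[OF cm(1)]])
  have oG: "order G = 32 * m" using order_SG cm(3)
    by (simp add: G_def order_def card_cartesian_product)
  have cH: "card H = 16 * m" using cardM cm(3)
    by (simp add: H_def order_def card_cartesian_product)
  have maxH: "maximal_subgroup H G" by (rule max2[OF gG finG sH]) (simp add: oG cH)
  have psiG: "psi G = 167 * psi (cyclic_group m)"
    unfolding G_def using psi_DirProd[OF gS cm(1) finS cm(2)] order_SG cm(3) cm(4) psi_SG by simp
  have GH: "G\<lparr>carrier := H\<rparr> = SG32_7\<lparr>carrier := M\<rparr> \<times>\<times> cyclic_group m"
    by (simp add: G_def H_def DirProd_def)
  have oM: "order (SG32_7\<lparr>carrier := M\<rparr>) = 16" using cardM by (simp add: order_def)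
  have psiH: "psi (G\<lparr>carrier := H\<rparr>) = 39 * psi (cyclic_group m)"
    unfolding GH using psi_DirProd[OF gM cm(1) _ cm(2)] finM oM cm(3) cm(5) psiM by simp
  have rc: "card (rcosets\<^bsub>G\<^esub> H) = 2"
  proof -
    have "card (rcosets\<^bsub>G\<^esub> H) * card H = order G" by (rule group.lagrange[OF gG sH])
    then have "card (rcosets\<^bsub>G\<^esub> H) * (16 * m) = 2 * (16 * m)" using oG cH by simp
    moreover have "16 * m \<noteq> 0" using m by (auto simp: odd_pos)
    ultimately show ?thesis by simp
  qed
  have pos: "0 < psi (cyclic_group m)" by (rule psi_pos[OF cm(1) cm(2)])
  show "let G = SG32_7 \<times>\<times> cyclic_group m; H = M \<times> carrier (cyclic_group m)
           in maximal_subgroup H G \<and>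
              psi G = 167 * psi (cyclic_group m) \<and>
              psi (G\<lparr>carrier := H\<rparr>) * (card (rcosets\<^bsub>G\<^esub> H))^2 = 156 * psi (cyclic_group m) \<and>
              psi G > psi (G\<lparr>carrier := H\<rparr>) * (card (rcosets\<^bsub>G\<^esub> H))^2"
    unfolding Let_def G_def[symmetric] H_def[symmetric]
    using maxH psiG psiH rc pos by simp
qed

end
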